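(* Let $n$ be a positive integer and $g=3n+1$. Then the image under $\sigma$ of $\mathcal{G}_{2n}(g,q\le 3)$ contains no pseudo-symmetric gapset, and in fact $$\sigma\big(\mathcal{G}_{2n}(g,q\le 3)\big)=\mathcal{G}_{2n+1}(g+1)\setminus\mathcal{P},$$ where $\mathcal{P}=\{G\in\mathcal{G}_{2n+1}(g+1): G \text{ is pseudo-symmetric}\}$.
   Context: A gapset is a finite set $G\subset\mathbb{N}=\{1,2,\dots\}$ such that whenever $z\in G$ and $z=x+y$ with $x,y\in\mathbb{N}$, then $x\in G$ or $y\in G$; its genus is $g=\#G$. Write $G=\{\ell_1<\dots<\ell_g\}$. The multiplicity is $m(G)=\min\{s\in\mathbb{N}:s\notin G\}$, the conductor $c(G)=\min\{s\in\mathbb{N}: s+t\notin G\ \forall t\in\mathbb{N}_0\}$, the Frobenius number $F(G)=c(G)-1$ (equal to $\ell_g$ for nonempty $G$), and the depth $q(G)=\lceil c(G)/m(G)\rceil$. $G$ is pseudo-symmetric if $F(G)=2g-2$. $G$ is pure $\kappa$-sparse if $\ell_{i+1}-\ell_i\le\kappa$ for all $i$ with equality for at least one $i$. $\mathcal{G}_\kappa(g)$ is the set of pure $\kappa$-sparse gapsets of genus $g$, and $\mathcal{G}_\kappa(g,q\le 3)$ the subset of those with depth at most $3$. For $G=\{\ell_1<\dots<\ell_g\}\in\mathcal{G}_{2n}(g)$ let $\alpha=\max\{i:\ell_{i+1}-\ell_i=2n\}$ and define $$\sigma(G)=\{1\}\cup\{\ell_i+1: 1\le i\le\alpha\}\cup\{\ell_i+2:\alpha+1\le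 i\le g\}$$ (note $\ell_1=1$, so $\sigma(G)=\{1<2<\ell_2+1<\dots<\ell_\alpha+1<\ell_{\alpha+1}+2<\dots<\ell_g+2\}$). *)

theory Defs
  imports Main
begin

definition gapset :: "nat set \<Rightarrow> bool" where
  "gapset G \<longleftrightarrow> finite G \<and> 0 \<notin> G \<and>
     (\<forall>z\<in>G. \<forall>x y. 0 < x \<longrightarrow> 0 < y \<longrightarrow> z = x + y \<longrightarrow> x \<in> G \<or> y \<in> G)"

definition genus :: "nat set \<Rightarrow> nat" where
  "genus G = card G"

definition multiplicity :: "nat set \<Rightarrow> nat" where
  "multiplicity G = (LEAST s. 0 < s \<and> s \<notin> G)"

definition conductor :: "nat set \<Rightarrow> nat" where
  "conductor G = (LEAST s. 0 < s \<and> (\<forall>t. s + t \<notin> G))"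

definition frobenius :: "nat set \<Rightarrow> nat" where
  "frobenius G = conductor G - 1"

text \<open>depth q(G) = ceiling (c(G) / m(G)), written as nat ceiling division (m(G) \<ge> 1 always)\<close>
definition depth :: "nat set \<Rightarrow> nat" where
  "depth G = (conductor G + multiplicity G - 1) div multiplicity G"

definition pseudo_symmetric :: "nat set \<Rightarrow> bool" where
  "pseudo_symmetric G \<longleftrightarrow> int (frobenius G) = 2 * int (genus G) - 2"

definition pure_sparse :: "nat \<Rightarrow> nat set \<Rightarrow> bool" where
  "pure_sparse \<kappa> G \<longleftrightarrow>
     (let l = sorted_list_of_set G in
        (\<forall>i. i + 1 < length l \<longrightarrow> l ! (i + 1) - l ! i \<le> \<kappa>) \<and>
        (\<exists>i. i + 1 < length l \<and> l ! (i + 1) - l ! i = \<kappa>))"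

definition pure_sparse_gapsets :: "nat \<Rightarrow> nat \<Rightarrow> nat set set" where
  "pure_sparse_gapsets \<kappa> g = {G. gapset G \<and> genus G = g \<and> pure_sparse \<kappa> G}"

definition pure_sparse_gapsets_depth3 :: "nat \<Rightarrow> nat \<Rightarrow> nat set set" where
  "pure_sparse_gapsets_depth3 \<kappa> g = {G \<in> pure_sparse_gapsets \<kappa> g. depth G \<le> 3}"

text \<open>With 0-based indices j (j = i - 1), the paper's
  alpha = a + 1 where a is the largest j with l!(j+1) - l!j = 2n; then
  sigma(G) = {1} \<union> {l!j + 1 | j \<le> a} \<union> {l!j + 2 | a < j < g}.\<close>
definition sigma :: "nat \<Rightarrow> nat set \<Rightarrow> nat set" where
  "sigma n G =
     (let l = sorted_list_of_set G;
          a = (GREATEST j. j + 1 < length l \<and> l ! (j + 1) - l ! j = 2 * n)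
      in {1} \<union> {l ! j + 1 | j. j \<le> a} \<union> {l ! j + 2 | j. a < j \<and> j < length l})"

end

theory Submission
  imports Defs
begin


definition cons :: "nat set \<Rightarrow> nat \<Rightarrow> nat \<Rightarrow> bool" where
  "cons G p q \<longleftrightarrow> p \<in> G \<and> q \<in> G \<and> p < q \<and> (\<forall>x. p < x \<and> x < q \<longrightarrow> x \<notin> G)"

lemma sl_mono:
  assumes "finite G" "i < j" "j < length (sorted_list_of_set G)"
  shows "sorted_list_of_set G ! i < sorted_list_of_set G ! j"
  using sorted_wrt_nth_less[OF sorted_list_of_set.strict_sorted_key_list_of_set[of G] assms(2,3)]
  by simp

lemma sl_le_iff:
  assumes "finite G" "i < length (sorted_list_of_set G)" "j < length (sorted_list_of_set G)"
  shows "sorted_list_of_set G ! i \<le> sorted_list_of_set G ! j \<longleftrightarrow> i \<le> j"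
  using sl_mono[OF assms(1) _ assms(3), of i] sl_mono[OF assms(1) _ assms(2), of j]
  by (metis le_eq_less_or_eq linorder_not_le order_less_imp_not_less)

lemma sl_mem:
  assumes "finite G" "i < length (sorted_list_of_set G)"
  shows "sorted_list_of_set G ! i \<in> G"
  using assms nth_mem set_sorted_list_of_set by metis

lemma sl_ex:
  assumes "finite G" "x \<in> G"
  shows "\<exists>i < length (sorted_list_of_set G). sorted_list_of_set G ! i = x"
  using assms by (metis in_set_conv_nth set_sorted_list_of_set)

lemma cons_nth:
  assumes "finite G" "i + 1 < length (sorted_list_of_set G)"
  shows "cons G (sorted_list_of_set G ! i) (sorted_list_of_set G ! (i+1))"
proof -
  let ?l = "sorted_list_of_set G"
  have "\<not> (?l!i < t \<and> t < ?l!(i+1))" if tG: "t \<in> G" for t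
  proof
    assume h: "?l!i < t \<and> t < ?l!(i+1)"
    obtain k where k: "k < length ?l" "?l!k = t" using sl_ex[OF assms(1) tG] by auto
    have "i < k" using h k sl_le_iff[OF assms(1), of k i] assms(2) by auto
    moreover have "k < i+1" using h k sl_le_iff[OF assms(1), of "i+1" k] assms(2) by auto
    ultimately show False by simp
  qed
  then show ?thesis unfolding cons_def
    using sl_mem[OF assms(1)] sl_mono[OF assms(1), of i "i+1"] assms(2) by auto
qed

lemma nth_cons:
  assumes "finite G" "cons G p q"
  shows "\<exists>i. i + 1 < length (sorted_list_of_set G) \<and> sorted_list_of_set G ! i = p \<and> sorted_list_of_set G ! (i+1) = q"
proof -
  let ?l = "sorted_list_of_set G"
  obtain i where i: "i < length ?l" "?l!i = p" using sl_ex[OF assms(1)] assms(2) unfolding cons_def by blast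
  obtain j where j: "j < length ?l" "?l!j = q" using sl_ex[OF assms(1)] assms(2) unfolding cons_def by blast
  have ij: "i < j" using sl_le_iff[OF assms(1) j(1) i(1)] i j assms(2) unfolding cons_def by auto
  have "j = i + 1"
  proof (rule ccontr)
    assume "j \<noteq> i+1"
    then have "i + 1 < j" using ij by simp
    then have "p < ?l!(i+1)" "?l!(i+1) < q" using sl_mono[OF assms(1)] i j by auto
    moreover have "?l!(i+1) \<in> G" using sl_mem[OF assms(1)] \<open>i+1<j\<close> j by auto
    ultimately show False using assms(2) unfolding cons_def by blast
  qed
  then show ?thesis using i j by auto
qed

lemma pure_sparse_iff:
  assumes "finite G"
  shows "pure_sparse k G \<longleftrightarrow> (\<forall>p q. cons G p q \<longrightarrow> q - p \<le> k) \<and> (\<exists>p q. cons G p q \<and> q - p = k)"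
  unfolding pure_sparse_def Let_def
  using cons_nth[OF assms] nth_cons[OF assms] by metis




definition sig :: "nat \<Rightarrow> nat \<Rightarrow> nat set \<Rightarrow> nat set" where
  "sig A B G = {1} \<union> (\<lambda>x. x+1) ` {x\<in>G. x \<le> A} \<union> (\<lambda>x. x+2) ` {x\<in>G. B \<le> x}"

lemma sigma_eq:
  assumes fin: "finite G" and c: "cons G A B" and B: "B = A + 2*n"
    and last: "\<forall>p q. cons G p q \<and> q = p + 2*n \<longrightarrow> p \<le> A"
  shows "sigma n G = sig A B G"
proof -
  let ?l = "sorted_list_of_set G"
  obtain i where i: "i + 1 < length ?l" "?l!i = A" "?l!(i+1) = B" using nth_cons[OF fin c] by blast
  have gr: "(GREATEST j. j + 1 < length ?l \<and> ?l ! (j + 1) - ?l ! j = 2 * n) = i"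
  proof (rule Greatest_equality)
    show "i + 1 < length ?l \<and> ?l ! (i + 1) - ?l ! i = 2 * n" using i B by simp
  next
    fix y assume y: "y + 1 < length ?l \<and> ?l ! (y + 1) - ?l ! y = 2 * n"
    have cy: "cons G (?l!y) (?l!(y+1))" using cons_nth[OF fin] y by blast
    then have "?l!(y+1) = ?l!y + 2*n" using y unfolding cons_def by auto
    then have "?l!y \<le> ?l!i" using last cy i by auto
    then show "y \<le> i" using sl_le_iff[OF fin, of y i] y i by auto
  qed
  have s1: "{?l ! j + 1 |j. j \<le> i} = (\<lambda>x. x+1) ` {x\<in>G. x \<le> A}"
  proof (rule set_eqI, rule iffI)
    fix z assume "z \<in> {?l ! j + 1 |j. j \<le> i}"
    then obtain j where j: "j \<le> i" "z = ?l!j + 1" by blast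
    then show "z \<in> (\<lambda>x. x+1) ` {x\<in>G. x \<le> A}"
      using sl_mem[OF fin, of j] sl_le_iff[OF fin, of j i] i by auto
  next
    fix z assume "z \<in> (\<lambda>x. x+1) ` {x\<in>G. x \<le> A}"
    then obtain x where x: "x \<in> G" "x \<le> A" "z = x + 1" by blast
    then obtain j where "j < length ?l" "?l!j = x" using sl_ex[OF fin] by blast
    then show "z \<in> {?l ! j + 1 |j. j \<le> i}" using sl_le_iff[OF fin, of j i] i x by auto
  qed
  have s2: "{?l ! j + 2 |j. i < j \<and> j < length ?l} = (\<lambda>x. x+2) ` {x\<in>G. B \<le> x}"
  proof (rule set_eqI, rule iffI)
    fix z assume "z \<in> {?l ! j + 2 |j. i < j \<and> j < length ?l}"
    then obtain j where j: "i < j" "j < length ?l" "z = ?l!j + 2" by blast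
    then show "z \<in> (\<lambda>x. x+2) ` {x\<in>G. B \<le> x}"
      using sl_mem[OF fin, of j] sl_le_iff[OF fin, of "i+1" j] i by auto
  next
    fix z assume "z \<in> (\<lambda>x. x+2) ` {x\<in>G. B \<le> x}"
    then obtain x where x: "x \<in> G" "B \<le> x" "z = x + 2" by blast
    then obtain j where "j < length ?l" "?l!j = x" using sl_ex[OF fin] by blast
    then show "z \<in> {?l ! j + 2 |j. i < j \<and> j < length ?l}" using sl_le_iff[OF fin, of "i+1" j] i x by auto
  qed
  show ?thesis unfolding sigma_def Let_def sig_def gr s1 s2 by (rule refl)
qed

lemma last_jump_ex:
  assumes fin: "finite G" and ps: "pure_sparse (2*n) G"
  shows "\<exists>A B. cons G A B \<and> B = A + 2*n \<and> (\<forall>p q. cons G p q \<and> q = p + 2*n \<longrightarrow> p \<le> A)"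
proof -
  let ?P = "{p. \<exists>q. cons G p q \<and> q = p + 2*n}"
  have sub: "?P \<subseteq> G" unfolding cons_def by auto
  obtain p q where pq: "cons G p q" "q - p = 2*n" using ps pure_sparse_iff[OF fin] by blast
  then have "q = p + 2*n" unfolding cons_def by auto
  then have "p \<in> ?P" using pq by blast
  then have ne: "?P \<noteq> {}" by blast
  have fP: "finite ?P" using finite_subset[OF sub fin] .
  have "Max ?P \<in> ?P" using Max_in[OF fP ne] .
  then obtain B where "cons G (Max ?P) B" "B = Max ?P + 2*n" by blast
  moreover have "\<forall>p q. cons G p q \<and> q = p + 2*n \<longrightarrow> p \<le> Max ?P" using Max_ge[OF fP] by blast
  ultimately show ?thesis by blast
qed




lemma gap_closed:
  assumes "gapset G" "x \<notin> G" "y \<notin> G" "0 < x" "0 < y"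
  shows "x + y \<notin> G"
  using assms unfolding gapset_def by blast

lemma gap_sub:
  assumes "gapset G" "y \<in> G" "m \<notin> G" "0 < m" "m < y"
  shows "y - m \<in> G"
  using gap_closed[OF assms(1) _ assms(3), of "y - m"] assms by fastforce

lemma mult_props:
  assumes "gapset G"
  shows "0 < multiplicity G" "multiplicity G \<notin> G"
    "\<And>x. 0 < x \<Longrightarrow> x \<notin> G \<Longrightarrow> multiplicity G \<le> x"
    "\<And>x. 0 < x \<Longrightarrow> x < multiplicity G \<Longrightarrow> x \<in> G"
proof -
  have fin: "finite G" using assms unfolding gapset_def by auto
  have ex: "0 < Suc (Max (insert 0 G)) \<and> Suc (Max (insert 0 G)) \<notin> G"
  proof -
    have "x \<le> Max (insert 0 G)" if "x \<in> G" for x using Max_ge[of "insert 0 G" x] fin that by auto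
    then show ?thesis by fastforce
  qed
  have P: "0 < multiplicity G \<and> multiplicity G \<notin> G"
    unfolding multiplicity_def by (rule LeastI[of _ "Suc (Max (insert 0 G))"]) (rule ex)
  then show "0 < multiplicity G" "multiplicity G \<notin> G" by auto
  show le: "\<And>x. 0 < x \<Longrightarrow> x \<notin> G \<Longrightarrow> multiplicity G \<le> x"
    unfolding multiplicity_def by (rule Least_le) auto
  show "\<And>x. 0 < x \<Longrightarrow> x < multiplicity G \<Longrightarrow> x \<in> G"
    using le by (meson not_le)
qed

lemma cond_eq:
  assumes "gapset G" "G \<noteq> {}"
  shows "conductor G = Max G + 1"
proof -
  have fin: "finite G" using assms unfolding gapset_def by auto
  show ?thesis unfolding conductor_def
  proof (rule Least_equality)
    show "0 < Max G + 1 \<and> (\<forall>t. Max G + 1 + t \<notin> G)" using Max_ge[OF fin] by fastforce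
  next
    fix y assume y: "0 < y \<and> (\<forall>t. y + t \<notin> G)"
    show "Max G + 1 \<le> y"
    proof (rule ccontr)
      assume "\<not> Max G + 1 \<le> y"
      then have "y + (Max G - y) = Max G" by simp
      then show False using y Max_in[OF fin assms(2)] by metis
    qed
  qed
qed

lemma frob_eq: "gapset G \<Longrightarrow> G \<noteq> {} \<Longrightarrow> frobenius G = Max G"
  unfolding frobenius_def using cond_eq by simp

lemma depth_iff:
  assumes "gapset G" "G \<noteq> {}"
  shows "depth G \<le> 3 \<longleftrightarrow> Max G + 1 \<le> 3 * multiplicity G"
proof -
  have m: "0 < multiplicity G" using mult_props[OF assms(1)] by simp
  have "depth G = (Max G + 1 + multiplicity G - 1) div multiplicity G"
    unfolding depth_def cond_eq[OF assms] ..
  also have "\<dots> = (Max G + multiplicity G) div multiplicity G" by simp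
  also have "\<dots> = Max G div multiplicity G + 1" using m by (simp add: div_add_self2)
  finally have d: "depth G = Max G div multiplicity G + 1" .
  have "Max G div multiplicity G \<le> 2 \<longleftrightarrow> Max G < 3 * multiplicity G"
    using m by (metis div_less_iff_less_mult less_Suc_eq_le mult.commute numeral_2_eq_2 numeral_3_eq_3)
  moreover have "Max G div multiplicity G + 1 \<le> 3 \<longleftrightarrow> Max G div multiplicity G \<le> 2" by arith
  moreover have "Max G + 1 \<le> 3 * multiplicity G \<longleftrightarrow> Max G < 3 * multiplicity G" by arith
  ultimately show ?thesis unfolding d by simp
qed

lemma ps_iff:
  assumes "gapset G" "G \<noteq> {}"
  shows "pseudo_symmetric G \<longleftrightarrow> int (Max G) = 2 * int (card G) - 2"
  unfolding pseudo_symmetric_def genus_def frob_eq[OF assms] ..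

lemma run_gaps:
  assumes "gapset G" "cons G p q" "0 < x" "x < q - p"
  shows "x \<in> G"
proof (rule ccontr)
  assume "x \<notin> G"
  moreover have "q - x \<notin> G" using assms(2-4) unfolding cons_def by auto
  moreover have "0 < q - x" using assms(4) by simp
  ultimately have "x + (q - x) \<notin> G" using gap_closed[OF assms(1), of x "q - x"] assms(3) by blast
  moreover have "x + (q - x) = q" using assms(4) by simp
  ultimately show False using assms unfolding cons_def by auto
qed

lemma pairing:
  assumes "gapset G" "G \<noteq> {}"
  shows "Max G + 1 + card (G \<inter> (\<lambda>x. Max G - x) ` G) \<le> 2 * card G"
proof -
  let ?F = "Max G"
  have fin: "finite G" using assms unfolding gapset_def by auto
  have FG: "?F \<in> G" using Max_in[OF fin assms(2)] .
  have cov: "{0..?F} \<subseteq> G \<union> (\<lambda>x. ?F - x) ` G"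
  proof
    fix x assume x: "x \<in> {0..?F}"
    show "x \<in> G \<union> (\<lambda>x. ?F - x) ` G"
    proof (cases "x \<in> G \<or> ?F - x \<in> G")
      case True
      then show ?thesis
      proof
        assume "?F - x \<in> G" then have "?F - (?F - x) \<in> (\<lambda>x. ?F - x) ` G" by blast
        moreover have "?F - (?F - x) = x" using x by simp
        ultimately show ?thesis by simp
      qed auto
    next
      case False
      then have "x \<noteq> 0" using FG by (metis diff_zero)
      moreover have "x \<noteq> ?F" using False FG by auto
      ultimately have "x + (?F - x) \<notin> G" using gap_closed[OF assms(1), of x "?F - x"] False x by simp
      moreover have "x + (?F - x) = ?F" using x by simp
      ultimately show ?thesis using FG by simp
    qed
  qed
  have "Max G + 1 \<le> card (G \<union> (\<lambda>x. ?F - x) ` G)"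
    using card_mono[OF _ cov] fin by auto
  moreover have "card (G \<union> (\<lambda>x. ?F - x) ` G) + card (G \<inter> (\<lambda>x. ?F - x) ` G) = card G + card ((\<lambda>x. ?F - x) ` G)"
    using card_Un_Int[of G "(\<lambda>x. ?F - x) ` G"] fin by auto
  moreover have "card ((\<lambda>x. ?F - x) ` G) \<le> card G" using card_image_le fin by blast
  ultimately show ?thesis by linarith
qed

lemma between:
  assumes fin: "finite G" and sp: "\<forall>p q. cons G p q \<longrightarrow> q - p \<le> k"
    and p: "p \<in> G" and q: "q \<in> G" and pq: "p < q" and big: "k < q - p"
  shows "\<exists>y\<in>G. p < y \<and> y < q"
proof -
  let ?T = "{t\<in>G. t < q}"
  have fT: "finite ?T" using fin by auto
  have pT: "p \<in> ?T" using p pq by auto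
  then have ne: "?T \<noteq> {}" by blast
  let ?r = "Max ?T"
  have rT: "?r \<in> ?T" using Max_in[OF fT ne] .
  have "p \<le> ?r" using Max_ge[OF fT pT] .
  have "cons G ?r q" unfolding cons_def using rT q Max_ge[OF fT] by fastforce
  then have "q - ?r \<le> k" using sp by blast
  then have "p \<noteq> ?r" using big by auto
  then have "p < ?r" using \<open>p \<le> ?r\<close> by simp
  then show ?thesis using rT by blast
qed

lemma next_gap:
  assumes fin: "finite G" and x: "x \<in> G" and y: "y \<in> G" and xy: "x < y"
  shows "\<exists>x'. cons G x x' \<and> x' \<le> y"
proof -
  let ?T = "{t\<in>G. x < t}"
  have fT: "finite ?T" using fin by auto
  have yT: "y \<in> ?T" using y xy by auto
  then have ne: "?T \<noteq> {}" by blast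
  have rT: "Min ?T \<in> ?T" using Min_in[OF fT ne] .
  have "cons G x (Min ?T)" unfolding cons_def using rT x Min_le[OF fT] by fastforce
  moreover have "Min ?T \<le> y" using Min_le[OF fT yT] .
  ultimately show ?thesis by blast
qed




lemma fin_of: "gapset G \<Longrightarrow> finite G" unfolding gapset_def by auto
lemma zero_of: "gapset G \<Longrightarrow> 0 \<notin> G" unfolding gapset_def by auto

lemma low_gaps_card:
  assumes "gapset G"
  shows "multiplicity G - 1 \<le> card G"
proof -
  have "{1..<multiplicity G} \<subseteq> G" using mult_props(4)[OF assms] by auto
  from card_mono[OF fin_of[OF assms] this] show ?thesis by simp
qed

lemma F_bound_A:
  assumes g: "gapset G" and cG: "card G = 3*n+1" and n: "0 < n"
    and sp: "\<forall>p q. cons G p q \<longrightarrow> q - p \<le> 2*n" and ne: "G \<noteq> {}"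
    and dep: "Max G + 1 \<le> 3 * multiplicity G"
  shows "Max G + 1 \<le> 6*n"
proof (rule ccontr)
  assume "\<not> Max G + 1 \<le> 6*n"
  then have F6: "6*n \<le> Max G" by simp
  define F where "F = Max G"
  define m where "m = multiplicity G"
  have fin: "finite G" using fin_of[OF g] .
  have FG: "F \<in> G" unfolding F_def using Max_in[OF fin ne] .
  have m0: "0 < m" "m \<notin> G" using mult_props[OF g] unfolding m_def by auto
  have mlow: "\<And>x. 0 < x \<Longrightarrow> x < m \<Longrightarrow> x \<in> G" using mult_props(4)[OF g] unfolding m_def by auto
  have m2: "2*n+1 \<le> m" using dep F6 unfolding m_def F_def by linarith
  have "m - 1 \<le> 3*n+1" using low_gaps_card[OF g] cG unfolding m_def by simp
  have Fm: "m < F" using \<open>m - 1 \<le> 3*n+1\<close> F6 n unfolding F_def by linarith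
  have mle: "m \<le> 3*n+1"
  proof -
    have "insert F {1..<m} \<subseteq> G" using mlow FG by auto
    from card_mono[OF fin this] have "card (insert F {1..<m}) \<le> 3*n+1" using cG by simp
    moreover have "F \<notin> {1..<m}" using Fm by simp
    ultimately show ?thesis using m0 by simp
  qed
  define p where "p = max (F - m) (m - 1)"
  have pG: "p \<in> G"
  proof (cases "F - m \<le> m - 1")
    case True then have "p = m - 1" unfolding p_def by simp
    then show ?thesis using mlow[of "m - 1"] m2 n by simp
  next
    case False then have "p = F - m" unfolding p_def by simp
    then show ?thesis using gap_sub[OF g FG m0(2) m0(1) Fm] by simp
  qed
  have pF: "p < F" "2*n < F - p" unfolding p_def using Fm m2 mle F6 n unfolding F_def by (auto simp: max_def)
  obtain y where y: "y \<in> G" "p < y" "y < F" using between[OF fin sp pG FG pF] by blast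
  have y1: "F - m < y" "m - 1 < y" using y(2) unfolding p_def by auto
  have Fy: "F - y \<in> G" using mlow[of "F - y"] y(3) y1(1) by simp
  have yne: "y \<noteq> F - y" using y1 y(3) by simp
  let ?I = "G \<inter> (\<lambda>x. F - x) ` G"
  have "y \<in> ?I"
  proof -
    have "F - (F - y) = y" using y(3) by simp
    then show ?thesis using y(1) Fy by (metis IntI image_eqI)
  qed
  moreover have "F - y \<in> ?I" using y(1) Fy by blast
  ultimately have "{y, F - y} \<subseteq> ?I" by blast
  from card_mono[OF _ this] have "2 \<le> card ?I" using yne fin by simp
  moreover have "F + 1 + card ?I \<le> 2 * card G" using pairing[OF g ne] unfolding F_def .
  ultimately show False using cG F6 unfolding F_def by linarith
qed

lemma special_card:
  assumes g: "gapset G" and c: "cons G A B" and Am: "A + 1 = multiplicity G"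
    and mB: "A + multiplicity G \<le> B" and F: "Max G \<le> B + multiplicity G"
  shows "card G \<le> A + 2"
proof -
  define m where "m = multiplicity G"
  have fin: "finite G" using fin_of[OF g] .
  have m0: "0 < m" "m \<notin> G" using mult_props[OF g] unfolding m_def by auto
  have "G \<subseteq> {1..A} \<union> {B, B + m}"
  proof
    fix t assume t: "t \<in> G"
    have t0: "0 < t" using zero_of[OF g] t by (cases t) auto
    have tF: "t \<le> Max G" using Max_ge[OF fin t] .
    show "t \<in> {1..A} \<union> {B, B + m}"
    proof (cases "t \<le> A")
      case True then show ?thesis using t0 by simp
    next
      case False
      then have "B \<le> t" using c t unfolding cons_def by (meson not_le)
      show ?thesis
      proof (cases "t = B")
        case False
        then have tB: "B < t" using \<open>B \<le> t\<close> by simp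
        have "m < t" using tB mB Am unfolding m_def by simp
        then have tm: "t - m \<in> G" using gap_sub[OF g t m0(2) m0(1)] by simp
        have "A < t - m" using tB mB unfolding m_def by simp
        moreover have "t - m \<le> B" using tF F unfolding m_def by simp
        ultimately have "t - m = B" using tm c unfolding cons_def by (meson le_neq_implies_less)
        then have "t = B + m" using \<open>m < t\<close> by simp
        then show ?thesis by simp
      qed simp
    qed
  qed
  from card_mono[OF _ this] have "card G \<le> card ({1..A} \<union> {B, B + m})" by simp
  also have "\<dots> \<le> card {1..A} + card {B, B+m}" by (rule card_Un_le)
  also have "\<dots> \<le> A + 2" by (simp add: card_insert_le_m1)
  finally show ?thesis .
qed




lemma img_add: "(z::nat) \<in> (\<lambda>x. x + k) ` S \<longleftrightarrow> k \<le> z \<and> z - k \<in> S"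
proof
  assume "z \<in> (\<lambda>x. x + k) ` S" then show "k \<le> z \<and> z - k \<in> S" by auto
next
  assume h: "k \<le> z \<and> z - k \<in> S"
  then have "z = (z - k) + k" by simp
  then show "z \<in> (\<lambda>x. x + k) ` S" using h by (metis image_eqI)
qed

lemma cons_le: "cons H p q \<Longrightarrow> r \<in> H \<Longrightarrow> p < r \<Longrightarrow> q \<le> r"
  unfolding cons_def by (meson not_le)

lemma card_sig:
  assumes fin: "finite G" and z: "0 \<notin> G" and c: "cons G A B"
  shows "card (sig A B G) = card G + 1"
proof -
  have A0: "0 < A + 1" by simp
  let ?L = "{x\<in>G. x \<le> A}" and ?U = "{x\<in>G. B \<le> x}"
  have GLU: "G = ?L \<union> ?U" using c unfolding cons_def by (auto simp: not_le)
  have dLU: "?L \<inter> ?U = {}" using c unfolding cons_def by auto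
  have cG: "card G = card ?L + card ?U" using card_Un_disjoint[of ?L ?U] fin dLU GLU by simp
  have i1: "card ((\<lambda>x. x+1) ` ?L) = card ?L" by (rule card_image) (auto simp: inj_on_def)
  have i2: "card ((\<lambda>x. x+2) ` ?U) = card ?U" by (rule card_image) (auto simp: inj_on_def)
  have d12: "(\<lambda>x. x+1) ` ?L \<inter> (\<lambda>x. x+2) ` ?U = {}" using c unfolding cons_def by auto
  have f1: "finite ((\<lambda>x. x+1) ` ?L)" "finite ((\<lambda>x. x+2) ` ?U)" using fin by auto
  have c12: "card ((\<lambda>x. x+1) ` ?L \<union> (\<lambda>x. x+2) ` ?U) = card ?L + card ?U"
    using card_Un_disjoint[OF f1 d12] i1 i2 by simp
  have n1: "1 \<notin> (\<lambda>x. x+1) ` ?L \<union> (\<lambda>x. x+2) ` ?U" using z by auto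
  have "sig A B G = insert 1 ((\<lambda>x. x+1) ` ?L \<union> (\<lambda>x. x+2) ` ?U)" unfolding sig_def by auto
  then show ?thesis using n1 c12 cG f1 by simp
qed


lemma forward:
  assumes n: "0 < n" and GA: "G \<in> pure_sparse_gapsets_depth3 (2*n) (3*n+1)"
  shows "sigma n G \<in> pure_sparse_gapsets (2*n+1) (3*n+2) \<and> \<not> pseudo_symmetric (sigma n G)"
proof -
  have g: "gapset G" and cG: "card G = 3*n+1" and ps: "pure_sparse (2*n) G" and dep: "depth G \<le> 3"
    using GA unfolding pure_sparse_gapsets_depth3_def pure_sparse_gapsets_def genus_def by auto
  have fin: "finite G" using fin_of[OF g] .
  have z0: "0 \<notin> G" using zero_of[OF g] .
  have sp: "\<forall>p q. cons G p q \<longrightarrow> q - p \<le> 2*n" using ps pure_sparse_iff[OF fin] by blast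
  obtain A B where c: "cons G A B" and AB: "B = A + 2*n"
    and last: "\<forall>p q. cons G p q \<and> q = p + 2*n \<longrightarrow> p \<le> A"
    using last_jump_ex[OF fin ps] by blast
  have AG: "A \<in> G" and BG: "B \<in> G" using c unfolding cons_def by auto
  have ne: "G \<noteq> {}" using AG by blast
  have sigeq: "sigma n G = sig A B G" using sigma_eq[OF fin c AB last] .
  define m where "m = multiplicity G"
  define F where "F = Max G"
  have m0: "0 < m" "m \<notin> G" using mult_props[OF g] unfolding m_def by auto
  have mlow: "\<And>x. 0 < x \<Longrightarrow> x < m \<Longrightarrow> x \<in> G" using mult_props(4)[OF g] unfolding m_def by auto
  have mle: "\<And>x. 0 < x \<Longrightarrow> x \<notin> G \<Longrightarrow> m \<le> x" using mult_props(3)[OF g] unfolding m_def by auto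
  have m2n: "2*n \<le> m"
  proof (rule ccontr)
    assume "\<not> 2*n \<le> m"
    then have "m \<in> G" using run_gaps[OF g c, of m] m0 AB by simp
    then show False using m0 by simp
  qed
  have A1G: "A + 1 \<notin> G" using c AB n unfolding cons_def by auto
  have mA: "m \<le> A + 1" using mle[OF _ A1G] by simp
  have FB: "B \<le> F" unfolding F_def using Max_ge[OF fin BG] .
  have FG: "F \<in> G" unfolding F_def using Max_in[OF fin ne] .
  have Fle: "\<And>x. x \<in> G \<Longrightarrow> x \<le> F" unfolding F_def using Max_ge[OF fin] by blast
  have F6: "F + 1 \<le> 6*n"
    using F_bound_A[OF g cG n sp ne] dep depth_iff[OF g ne] unfolding F_def by simp
  have A1: "1 \<le> A" using AG z0 by (cases A) auto
  define H where "H = sig A B G"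
  have memH: "\<And>z. z \<in> H \<longleftrightarrow> z = 1 \<or> (1 \<le> z \<and> z - 1 \<in> G \<and> z - 1 \<le> A) \<or> (2 \<le> z \<and> z - 2 \<in> G \<and> B \<le> z - 2)"
    unfolding H_def sig_def by (simp only: Un_iff img_add mem_Collect_eq singleton_iff) blast
  have between: "\<And>x. A < x \<Longrightarrow> x < B \<Longrightarrow> x \<notin> G" using c unfolding cons_def by auto
  have nb: "x \<le> B \<Longrightarrow> x - 1 \<notin> G" "B + 2 \<le> x \<Longrightarrow> x - 2 \<notin> G" "x \<noteq> 1" "m + 1 \<le> x"
    if xH: "x \<notin> H" and x0: "0 < x" for x
  proof -
    show x1: "x \<noteq> 1" using xH memH by blast
    show b: "x - 1 \<notin> G" if "x \<le> B"
    proof (cases "x - 1 \<le> A")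
      case True then show ?thesis using xH memH x0 by auto
    next
      case False then show ?thesis using between[of "x - 1"] that by auto
    qed
    show "x - 2 \<notin> G" if "B + 2 \<le> x" using xH memH that by auto
    show "m + 1 \<le> x"
    proof (cases "x \<le> B")
      case True
      then have "x - 1 \<notin> G" using b by blast
      moreover have "0 < x - 1" using x1 x0 by simp
      ultimately have "m \<le> x - 1" using mle by blast
      then show ?thesis using m0(1) by linarith
    next
      case False then show ?thesis using mA AB n by simp
    qed
  qed
  have Hclosed: "x + y \<notin> H" if xH: "x \<notin> H" and yH: "y \<notin> H" and x0: "0 < x" and y0: "0 < y" for x y
  proof
    assume zH: "x + y \<in> H"
    have xm: "m + 1 \<le> x" and ym: "m + 1 \<le> y" using nb xH yH x0 y0 by auto
    have "x + y \<noteq> 1" using xm ym m0 by simp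
    then consider (lo) "x + y - 1 \<in> G" "x + y - 1 \<le> A" | (hi) "x + y - 2 \<in> G" "B \<le> x + y - 2"
      using memH zH by blast
    then show False
    proof cases
      case lo then show ?thesis using xm ym m2n AB FB F6 by linarith
    next
      case hi
      have zF: "x + y - 2 \<le> F" using Fle hi(1) .
      have key: "False" if uH: "u \<notin> H" and vH: "v \<notin> H" and u0: "0 < u" and v0: "0 < v"
        and vB: "v \<le> B" and uB: "B < u" and uv: "u + v - 2 \<in> G" for u v
      proof -
        have um: "m + 1 \<le> v" using nb vH v0 by auto
        have v1: "v - 1 \<notin> G" using nb(1)[OF vH v0 vB] .
        have uvF: "u + v - 2 \<le> F" using Fle uv .
        show False
        proof (cases "u = B + 1")
          case False
          then have "B + 2 \<le> u" using uB by simp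
          then have "u - 2 \<notin> G" using nb(2)[OF uH u0] by blast
          then have "u - 2 \<noteq> B" using BG by blast
          then have "B + 3 \<le> u" using \<open>B + 2 \<le> u\<close> by simp
          then show False using um uvF mA AB m2n F6 by linarith
        next
          case True
          have "m \<le> v - 1" using um by simp
          have eqs: "m = 2*n" "A + 1 = m" using True um uvF mA AB m2n F6 by linarith+
          have "card G \<le> A + 2"
            using special_card[OF g c] eqs True um uvF AB F6 unfolding m_def F_def by linarith
          then show False using cG eqs n by linarith
        qed
      qed
      show False
      proof (cases "x \<le> B")
        case xB: True
        show False
        proof (cases "y \<le> B")
          case True
          have "x - 1 \<notin> G" "y - 1 \<notin> G" using nb(1) xH yH x0 y0 xB True by auto
          moreover have "0 < x - 1" "0 < y - 1" using xm ym m0 by auto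
          ultimately have "(x - 1) + (y - 1) \<notin> G" using gap_closed[OF g] by blast
          moreover have "(x - 1) + (y - 1) = x + y - 2" using xm ym m0 by simp
          ultimately show False using hi by simp
        next
          case False
          show False using key[OF yH xH y0 x0 xB] False hi by (simp add: add.commute)
        qed
      next
        case xB: False
        show False
        proof (cases "y \<le> B")
          case True
          show False using key[OF xH yH x0 y0 True] xB hi by simp
        next
          case False
          then show False using xB zF AB mA m2n F6 n by linarith
        qed
      qed
    qed
  qed
  have Hsub: "H \<subseteq> {..F+2}" using memH Fle by fastforce
  have finH: "finite H" using finite_subset[OF Hsub] by simp
  have z0H: "0 \<notin> H" using memH by simp
  have gH: "gapset H" unfolding gapset_def using finH z0H Hclosed by blast
  have cH: "card H = 3*n+2" using card_sig[OF fin z0 c] cG unfolding H_def by simp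
  have FH: "F + 2 \<in> H" using memH FG FB by simp
  have HneF: "H \<noteq> {}" using FH by blast
  have MaxH: "Max H = F + 2"
    by (rule Max_eqI[OF finH]) (use Hsub FH in auto)
  have spH: "\<forall>p q. cons H p q \<longrightarrow> q - p \<le> 2*n+1"
  proof (intro allI impI)
    fix p q assume pq: "cons H p q"
    have pH: "p \<in> H" and qH: "q \<in> H" and plq: "p < q" using pq unfolding cons_def by auto
    consider (one) "p = 1" | (lo) "1 \<le> p" "p - 1 \<in> G" "p - 1 \<le> A" | (hi) "2 \<le> p" "p - 2 \<in> G" "B \<le> p - 2"
      using memH pH by blast
    then show "q - p \<le> 2*n+1"
    proof cases
      case one
      have "2 \<in> H" using memH mlow[of 1] m2n n A1 by simp
      then have "q \<le> 2" using cons_le[OF pq] one by simp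
      then show ?thesis using one by simp
    next
      case lo
      show ?thesis
      proof (cases "p - 1 = A")
        case True
        have "B + 2 \<in> H" using memH BG by simp
        then have "q \<le> B + 2" using cons_le[OF pq] True lo AB by simp
        then show ?thesis using True lo AB by simp
      next
        case False
        then have "p - 1 < A" using lo by simp
        then obtain x' where x': "cons G (p - 1) x'" "x' \<le> A" using next_gap[OF fin lo(2) AG] by blast
        have "x' \<in> G" "p - 1 < x'" using x'(1) unfolding cons_def by auto
        then have "x' + 1 \<in> H" using memH x'(2) by simp
        then have "q \<le> x' + 1" using cons_le[OF pq] \<open>p - 1 < x'\<close> lo by simp
        moreover have "x' - (p - 1) \<le> 2*n" using sp x'(1) by blast
        ultimately show ?thesis using lo \<open>p - 1 < x'\<close> by linarith
      qed
    next
      case hi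
      have "q - 2 \<in> G" "B \<le> q - 2"
      proof -
        have "q \<noteq> 1" "\<not> (1 \<le> q \<and> q - 1 \<in> G \<and> q - 1 \<le> A)" using plq hi AB by auto
        then show "q - 2 \<in> G" "B \<le> q - 2" using memH qH by blast+
      qed
      obtain x' where x': "cons G (p - 2) x'" "x' \<le> q - 2"
        using next_gap[OF fin hi(2) \<open>q - 2 \<in> G\<close>] plq hi by (metis diff_less_mono le_Suc_ex le_add1 less_le_trans)
      have "x' \<in> G" "p - 2 < x'" using x'(1) unfolding cons_def by auto
      then have "x' + 2 \<in> H" using memH hi by simp
      then have "q \<le> x' + 2" using cons_le[OF pq] \<open>p - 2 < x'\<close> hi by simp
      moreover have "x' - (p - 2) \<le> 2*n" using sp x'(1) by blast
      ultimately show ?thesis using hi \<open>p - 2 < x'\<close> by linarith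
    qed
  qed
  have exH: "cons H (A+1) (B+2)"
    unfolding cons_def using memH AG BG AB A1 by auto
  have psH: "pure_sparse (2*n+1) H"
    using pure_sparse_iff[OF finH] spH exH AB by fastforce
  have "\<not> pseudo_symmetric H"
    using ps_iff[OF gH HneF] MaxH cH F6 by simp
  moreover have "H \<in> pure_sparse_gapsets (2*n+1) (3*n+2)"
    unfolding pure_sparse_gapsets_def genus_def using gH cH psH by simp
  ultimately show ?thesis using sigeq unfolding H_def by simp
qed




lemma F_not_sym:
  assumes g: "gapset H" and cH: "card H = 3*n+2" and F: "Max H = 6*n+3"
    and sp: "\<forall>p q. cons H p q \<longrightarrow> q - p \<le> 2*n+1" and mb: "2*n+1 \<le> multiplicity H" and n: "0 < n"
  shows False
proof -
  define m where "m = multiplicity H"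
  have fin: "finite H" using fin_of[OF g] .
  have ne: "H \<noteq> {}" using cH by auto
  have m0: "0 < m" "m \<notin> H" using mult_props[OF g] unfolding m_def by auto
  have mlow: "\<And>x. 0 < x \<Longrightarrow> x < m \<Longrightarrow> x \<in> H" using mult_props(4)[OF g] unfolding m_def by auto
  have FH: "Max H \<in> H" using Max_in[OF fin ne] .
  let ?I = "H \<inter> (\<lambda>x. Max H - x) ` H"
  have "Max H + 1 + card ?I \<le> 2 * card H" using pairing[OF g ne] .
  then have "card ?I = 0" using F cH by simp
  then have I0: "?I = {}" using fin by simp
  have "m - 1 \<le> 3*n+2" using low_gaps_card[OF g] cH unfolding m_def by simp
  then have mF: "m < Max H" using F n by simp
  have FmH: "Max H - m \<in> H" using gap_sub[OF g FH m0(2) m0(1) mF] .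
  have "cons H (Max H - m) (Max H)"
    unfolding cons_def
  proof (intro conjI allI impI FmH FH)
    show "Max H - m < Max H" using mF m0 by simp
  next
    fix t assume t: "Max H - m < t \<and> t < Max H"
    show "t \<notin> H"
    proof
      assume tH: "t \<in> H"
      have "Max H - t < m" using t by linarith
      then have "Max H - t \<in> H" using mlow[of "Max H - t"] t by simp
      moreover have "Max H - (Max H - t) = t" using t by simp
      ultimately have "t \<in> ?I" using tH by (metis IntI image_eqI)
      then show False using I0 by simp
    qed
  qed
  then have "Max H - (Max H - m) \<le> 2*n+1" using sp by blast
  then have "m = 2*n+1" using mb mF unfolding m_def by simp
  then have "m + m \<notin> H" using gap_closed[OF g m0(2) m0(2) m0(1) m0(1)] by simp
  moreover have "Max H - m = m + m" using F \<open>m = 2*n+1\<close> by simp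
  ultimately show False using FmH by simp
qed


lemma backward:
  assumes n: "0 < n" and HB: "H \<in> pure_sparse_gapsets (2*n+1) (3*n+2)" and nps: "\<not> pseudo_symmetric H"
  shows "H \<in> sigma n ` pure_sparse_gapsets_depth3 (2*n) (3*n+1)"
proof -
  have g: "gapset H" and cH: "card H = 3*n+2" and ps: "pure_sparse (2*n+1) H"
    using HB unfolding pure_sparse_gapsets_def genus_def by auto
  have fin: "finite H" using fin_of[OF g] .
  have z0: "0 \<notin> H" using zero_of[OF g] .
  have sp: "\<forall>p q. cons H p q \<longrightarrow> q - p \<le> 2*n+1" using ps pure_sparse_iff[OF fin] by blast
  obtain a b where cab: "cons H a b" and "b - a = 2*n+1" using ps pure_sparse_iff[OF fin] by blast
  then have ab: "b = a + 2*n+1" unfolding cons_def by auto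
  have aH: "a \<in> H" and bH: "b \<in> H" using cab unfolding cons_def by auto
  have ne: "H \<noteq> {}" using aH by blast
  define m where "m = multiplicity H"
  define F where "F = Max H"
  have m0: "0 < m" "m \<notin> H" using mult_props[OF g] unfolding m_def by auto
  have mlow: "\<And>x. 0 < x \<Longrightarrow> x < m \<Longrightarrow> x \<in> H" using mult_props(4)[OF g] unfolding m_def by auto
  have mle: "\<And>x. 0 < x \<Longrightarrow> x \<notin> H \<Longrightarrow> m \<le> x" using mult_props(3)[OF g] unfolding m_def by auto
  have m2n: "2*n+1 \<le> m"
  proof (rule ccontr)
    assume "\<not> 2*n+1 \<le> m"
    then have "m \<in> H" using run_gaps[OF g cab, of m] m0 ab by simp
    then show False using m0 by simp
  qed
  have betw: "\<And>x. a < x \<Longrightarrow> x < b \<Longrightarrow> x \<notin> H" using cab unfolding cons_def by auto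
  have a1H: "a + 1 \<notin> H" using betw[of "a+1"] ab n by simp
  have ma: "m \<le> a + 1" using mle[OF _ a1H] by simp
  have FH: "F \<in> H" unfolding F_def using Max_in[OF fin ne] .
  have Fle: "\<And>x. x \<in> H \<Longrightarrow> x \<le> F" unfolding F_def using Max_ge[OF fin] by blast
  have bF: "b \<le> F" using Fle[OF bH] .
  have F1: "F + 1 \<le> 6*n+4" using pairing[OF g ne] cH unfolding F_def by simp
  have F2: "F \<noteq> 6*n+2" using nps ps_iff[OF g ne] cH unfolding F_def by simp
  have F3: "F \<noteq> 6*n+3" using F_not_sym[OF g cH _ sp _ n] m2n unfolding F_def m_def by blast
  have F6: "F \<le> 6*n+1" using F1 F2 F3 by simp
  define A where "A = a - 1"
  define B where "B = b - 2"
  have aA: "a = A + 1" and bB: "b = B + 2" and AB: "B = A + 2*n" unfolding A_def B_def using ma m2n ab n by auto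
  define G where "G = (\<lambda>y. y - 1) ` {y\<in>H. 2 \<le> y \<and> y \<le> a} \<union> (\<lambda>y. y - 2) ` {y\<in>H. b \<le> y}"
  have memG: "\<And>z. z \<in> G \<longleftrightarrow> (1 \<le> z \<and> z \<le> A \<and> z + 1 \<in> H) \<or> (B \<le> z \<and> z + 2 \<in> H)"
  proof
    fix z assume "z \<in> G"
    then consider y where "y \<in> H" "2 \<le> y" "y \<le> a" "z = y - 1" | y where "y \<in> H" "b \<le> y" "z = y - 2"
      unfolding G_def by blast
    then show "(1 \<le> z \<and> z \<le> A \<and> z + 1 \<in> H) \<or> (B \<le> z \<and> z + 2 \<in> H)"
    proof cases
      case (1 y)
      then have "z + 1 = y" by simp
      then show ?thesis using 1 aA by auto
    next
      case (2 y)
      then have "z + 2 = y" using bB by simp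
      then show ?thesis using 2 bB by auto
    qed
  next
    fix z assume h: "(1 \<le> z \<and> z \<le> A \<and> z + 1 \<in> H) \<or> (B \<le> z \<and> z + 2 \<in> H)"
    then show "z \<in> G"
    proof
      assume h1: "1 \<le> z \<and> z \<le> A \<and> z + 1 \<in> H"
      then have "z + 1 \<in> {y\<in>H. 2 \<le> y \<and> y \<le> a}" using aA by simp
      then have "(z + 1) - 1 \<in> (\<lambda>y. y - 1) ` {y\<in>H. 2 \<le> y \<and> y \<le> a}" by (rule imageI)
      then show "z \<in> G" unfolding G_def by simp
    next
      assume h2: "B \<le> z \<and> z + 2 \<in> H"
      then have "z + 2 \<in> {y\<in>H. b \<le> y}" using bB by simp
      then have "(z + 2) - 2 \<in> (\<lambda>y. y - 2) ` {y\<in>H. b \<le> y}" by (rule imageI)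
      then show "z \<in> G" unfolding G_def by simp
    qed
  qed
  have finG: "finite G" unfolding G_def using fin by simp
  have A2: "2*n \<le> A + 1" using ma m2n aA by simp
  have z0G: "0 \<notin> G" using memG AB A2 n by auto
  have AG: "A \<in> G" using memG aH aA A2 n by auto
  have BG: "B \<in> G" using memG bH bB by auto
  have cAB: "cons G A B" unfolding cons_def using AG BG AB n memG by auto
  have Hsig: "sig A B G = H"
  proof (rule set_eqI)
    fix z
    have e: "z \<in> sig A B G \<longleftrightarrow> z = 1 \<or> (1 \<le> z \<and> z - 1 \<in> G \<and> z - 1 \<le> A) \<or> (2 \<le> z \<and> z - 2 \<in> G \<and> B \<le> z - 2)"
      unfolding sig_def by (simp only: Un_iff img_add mem_Collect_eq singleton_iff) blast
    show "z \<in> sig A B G \<longleftrightarrow> z \<in> H"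
    proof
      assume "z \<in> sig A B G"
      then consider "z = 1" | "1 \<le> z" "z - 1 \<in> G" "z - 1 \<le> A" | "2 \<le> z" "z - 2 \<in> G" "B \<le> z - 2"
        using e by blast
      then show "z \<in> H"
      proof cases
        case 1 then show ?thesis using mlow[of 1] m2n n by simp
      next
        case 2
        have e1: "z - 1 + 1 = z" using 2 by simp
        show ?thesis using memG[of "z - 1"] AB n 2 e1 by auto
      next
        case 3
        have e2: "z - 2 + 2 = z" using 3 by simp
        show ?thesis using memG[of "z - 2"] AB n 3 e2 by auto
      qed
    next
      assume zH: "z \<in> H"
      have "0 < z" using zH z0 by (cases z) auto
      consider "z = 1" | "2 \<le> z" "z \<le> a" | "b \<le> z" using betw[of z] zH \<open>0 < z\<close> by linarith
      then show "z \<in> sig A B G"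
      proof cases
        case 1 then show ?thesis using e by simp
      next
        case 2
        have "1 \<le> z - 1" "z - 1 \<le> A" "z - 1 + 1 = z" using 2 aA by auto
        then have "z - 1 \<in> G" using memG[of "z - 1"] zH by auto
        moreover have "z - 1 \<le> A" "1 \<le> z" using 2 aA by linarith+
        ultimately show ?thesis using e by blast
      next
        case 3
        have "B \<le> z - 2" "z - 2 + 2 = z" using 3 bB by auto
        then have "z - 2 \<in> G" using memG[of "z - 2"] zH by auto
        moreover have "B \<le> z - 2" "2 \<le> z" using 3 bB by linarith+
        ultimately show ?thesis using e by blast
      qed
    qed
  qed
  have liftU: "cons H (p+2) (q+2)" if pq: "cons G p q" and pB: "B \<le> p" for p q
    unfolding cons_def
  proof (intro conjI allI impI)
    have "p \<in> G" "q \<in> G" "p < q" using pq unfolding cons_def by auto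
    then show "p + 2 \<in> H" "q + 2 \<in> H" "p + 2 < q + 2" using memG pB AB n by auto
    fix t assume t: "p + 2 < t \<and> t < q + 2"
    show "t \<notin> H"
    proof
      assume "t \<in> H"
      moreover have "B \<le> t - 2" "t - 2 + 2 = t" using t pB by linarith+
      ultimately have "t - 2 \<in> G" using memG[of "t - 2"] by auto
      moreover have "p < t - 2" "t - 2 < q" using t by auto
      ultimately show False using pq unfolding cons_def by blast
    qed
  qed
  have liftL: "cons H (p+1) (q+1)" if pq: "cons G p q" and qA: "q \<le> A" for p q
    unfolding cons_def
  proof (intro conjI allI impI)
    have "p \<in> G" "q \<in> G" "p < q" using pq unfolding cons_def by auto
    then show "p + 1 \<in> H" "q + 1 \<in> H" "p + 1 < q + 1" using memG qA AB n by auto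
    fix t assume t: "p + 1 < t \<and> t < q + 1"
    show "t \<notin> H"
    proof
      assume "t \<in> H"
      moreover have "1 \<le> t - 1" "t - 1 \<le> A" "t - 1 + 1 = t" using t qA by linarith+
      ultimately have "t - 1 \<in> G" using memG[of "t - 1"] by auto
      moreover have "p < t - 1" "t - 1 < q" using t by auto
      ultimately show False using pq unfolding cons_def by blast
    qed
  qed
  have gG: "gapset G"
    unfolding gapset_def
  proof (intro conjI ballI allI impI finG z0G)
    fix z x y assume zG: "z \<in> G" and x0: "0 < x" and y0: "0 < y" and zxy: "z = x + y"
    show "x \<in> G \<or> y \<in> G"
    proof (rule ccontr)
      assume "\<not> (x \<in> G \<or> y \<in> G)"
      then have xG: "x \<notin> G" and yG: "y \<notin> G" by auto
      have nb: "u < B \<Longrightarrow> u + 1 \<notin> H" "B < u \<Longrightarrow> u + 2 \<notin> H" "m \<le> u + 1"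
        if uG: "u \<notin> G" and u0: "0 < u" for u
      proof -
        show l: "u + 1 \<notin> H" if "u < B"
        proof (cases "u \<le> A")
          case True then show ?thesis using memG uG u0 by auto
        next
          case False then show ?thesis using betw[of "u+1"] that aA bB by simp
        qed
        show "u + 2 \<notin> H" if "B < u" using memG uG that by auto
        show "m \<le> u + 1"
        proof (cases "u < B")
          case True then show ?thesis using l mle[of "u+1"] by simp
        next
          case False then show ?thesis using AB aA ma n by simp
        qed
      qed
      have xm: "m \<le> x + 1" and ym: "m \<le> y + 1" using nb xG yG x0 y0 by auto
      consider (lo) "1 \<le> z" "z \<le> A" "z + 1 \<in> H" | (hi) "B \<le> z" "z + 2 \<in> H" using memG zG by blast
      then show False
      proof cases
        case lo then show False using zxy xm ym aA ab bF F6 m2n by linarith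
      next
        case hi
        have zF: "z + 2 \<le> F" using Fle hi(2) .
        show False
        proof (cases "B < x \<or> B < y")
          case True
          then show False using zxy xm ym zF AB aA ma m2n F6 x0 y0 by linarith
        next
          case False
          have "x \<noteq> B" "y \<noteq> B" using xG yG BG by auto
          then have "x < B" "y < B" using False by auto
          then have "x + 1 \<notin> H" "y + 1 \<notin> H" using nb xG yG x0 y0 by auto
          then have "(x + 1) + (y + 1) \<notin> H" using gap_closed[OF g, of "x+1" "y+1"] by simp
          then show False using hi zxy by (simp add: add.commute add.left_commute)
        qed
      qed
    qed
  qed
  have cG: "card G = 3*n+1" using card_sig[OF finG z0G cAB] Hsig cH by simp
  have neG: "G \<noteq> {}" using AG by blast
  have nojump: "False" if pq: "cons H p q" and pq2: "q = p + 2*n+1" and qa: "q \<le> a \<or> b \<le> p" for p q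
  proof -
    have "p + 1 \<notin> H" using pq pq2 n unfolding cons_def by auto
    then have "m \<le> p + 1" using mle by simp
    moreover have "q \<le> F" using pq Fle unfolding cons_def by auto
    ultimately show False using qa
    proof (elim disjE)
      assume "q \<le> a" then show False using \<open>m \<le> p + 1\<close> pq2 ab F6 m2n ma bF by linarith
    next
      assume "b \<le> p" then show False using \<open>m \<le> p + 1\<close> \<open>q \<le> F\<close> pq2 ab F6 m2n ma by linarith
    qed
  qed
  have spG: "\<forall>p q. cons G p q \<longrightarrow> q - p \<le> 2*n"
  proof (intro allI impI)
    fix p q assume pq: "cons G p q"
    have pG: "p \<in> G" and qG: "q \<in> G" and plq: "p < q" using pq unfolding cons_def by auto
    show "q - p \<le> 2*n"
    proof (cases "q \<le> A")
      case True
      have c1: "cons H (p+1) (q+1)" using liftL[OF pq True] .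
      have "q - p \<le> 2*n+1" using sp c1 by fastforce
      moreover have "q - p \<noteq> 2*n+1"
      proof
        assume "q - p = 2*n+1"
        then have "q + 1 = (p + 1) + 2*n + 1" using plq by simp
        then show False using nojump[OF c1] True aA by simp
      qed
      ultimately show ?thesis by simp
    next
      case qA: False
      show ?thesis
      proof (cases "B \<le> p")
        case True
        have c1: "cons H (p+2) (q+2)" using liftU[OF pq True] .
        have "q - p \<le> 2*n+1" using sp c1 by fastforce
        moreover have "q - p \<noteq> 2*n+1"
        proof
          assume "q - p = 2*n+1"
          then have "q + 2 = (p + 2) + 2*n + 1" using plq by simp
          then show False using nojump[OF c1] True bB by simp
        qed
        ultimately show ?thesis by simp
      next
        case False
        have "q \<ge> B" using qA qG cAB unfolding cons_def by (meson not_le)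
        have "p \<le> A" using False pG cAB unfolding cons_def by (meson not_le)
        have "p = A" using pq AG \<open>p \<le> A\<close> qA unfolding cons_def by (meson le_neq_implies_less not_le)
        have "q = B" using pq BG \<open>q \<ge> B\<close> \<open>p = A\<close> AB n unfolding cons_def
          by (metis le_neq_implies_less less_add_same_cancel1 mult_pos_pos zero_less_numeral)
        then show ?thesis using \<open>p = A\<close> AB by simp
      qed
    qed
  qed
  have psG: "pure_sparse (2*n) G" using pure_sparse_iff[OF finG] spG cAB AB by fastforce
  have lastG: "\<forall>p q. cons G p q \<and> q = p + 2*n \<longrightarrow> p \<le> A"
  proof (intro allI impI)
    fix p q assume h: "cons G p q \<and> q = p + 2*n"
    show "p \<le> A"
    proof (rule ccontr)
      assume "\<not> p \<le> A"
      then have "B \<le> p" using h cAB unfolding cons_def by (meson not_le)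
      have c1: "cons H (p+2) (q+2)" using liftU[OF _ \<open>B \<le> p\<close>] h by blast
      have "q + 2 \<le> F" using c1 Fle unfolding cons_def by auto
      then have eqs: "F = 6*n+1" "a = 2*n" "p + 2 = b" using h \<open>B \<le> p\<close> bB ab ma m2n F6 by linarith+
      have "H \<subseteq> {1..2*n} \<union> {b, F}"
      proof
        fix y assume yH: "y \<in> H"
        have "0 < y" using yH z0 by (cases y) auto
        show "y \<in> {1..2*n} \<union> {b, F}"
        proof (cases "y \<le> a")
          case True then show ?thesis using \<open>0 < y\<close> eqs by simp
        next
          case False
          then have "b \<le> y" using betw[of y] yH by (meson not_le)
          have "y \<le> F" using Fle yH .
          have "\<not> (p + 2 < y \<and> y < q + 2)" using c1 yH unfolding cons_def by blast
          moreover have "q = p + 2*n" using h by simp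
          ultimately have "y = b \<or> y = F" using \<open>b \<le> y\<close> \<open>y \<le> F\<close> eqs ab by linarith
          then show ?thesis by auto
        qed
      qed
      from card_mono[OF _ this] have "card H \<le> card ({1..2*n} \<union> {b, F})" by simp
      also have "\<dots> \<le> card {1..2*n} + card {b, F}" by (rule card_Un_le)
      also have "\<dots> \<le> 2*n + 2" by (simp add: card_insert_le_m1)
      finally show False using cH n by simp
    qed
  qed
  have sigG: "sigma n G = H" using sigma_eq[OF finG cAB AB lastG] Hsig by simp
  have MaxG: "Max G = F - 2"
  proof (rule Max_eqI[OF finG])
    fix z assume "z \<in> G"
    then show "z \<le> F - 2" using memG Fle aA ab bF by fastforce
  next
    have "B \<le> F - 2" "F - 2 + 2 = F" using bF bB by linarith+
    then show "F - 2 \<in> G" using memG[of "F - 2"] FH by auto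
  qed
  have mG: "2*n \<le> multiplicity G"
  proof (rule ccontr)
    assume "\<not> 2*n \<le> multiplicity G"
    moreover have "0 < multiplicity G" "multiplicity G \<notin> G" using mult_props[OF gG] by auto
    ultimately show False using memG[of "multiplicity G"] mlow[of "multiplicity G + 1"] m2n A2 by simp
  qed
  have "F - 2 + 1 \<le> 3 * multiplicity G" using mG F6 n by arith
  then have "depth G \<le> 3" using depth_iff[OF gG neG] MaxG by simp
  then have "G \<in> pure_sparse_gapsets_depth3 (2*n) (3*n+1)"
    unfolding pure_sparse_gapsets_depth3_def pure_sparse_gapsets_def genus_def using gG cG psG by simp
  then show ?thesis using sigG by (metis image_eqI)
qed




theorem mainTheorem2:
  fixes n g :: nat
  assumes "0 < n" and "g = 3 * n + 1"
  shows "(\<forall>G \<in> sigma n ` pure_sparse_gapsets_depth3 (2 * n) g. \<not> pseudo_symmetric G) \<and>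
         sigma n ` pure_sparse_gapsets_depth3 (2 * n) g =
           pure_sparse_gapsets (2 * n + 1) (g + 1)
             - {G \<in> pure_sparse_gapsets (2 * n + 1) (g + 1). pseudo_symmetric G}"
proof -
  have g1: "g + 1 = 3*n+2" using assms(2) by simp
  have fw: "\<And>G. G \<in> pure_sparse_gapsets_depth3 (2 * n) g \<Longrightarrow>
      sigma n G \<in> pure_sparse_gapsets (2*n+1) (3*n+2) \<and> \<not> pseudo_symmetric (sigma n G)"
    using forward[OF assms(1)] assms(2) by blast
  have bw: "\<And>H. H \<in> pure_sparse_gapsets (2*n+1) (3*n+2) \<Longrightarrow> \<not> pseudo_symmetric H \<Longrightarrow>
      H \<in> sigma n ` pure_sparse_gapsets_depth3 (2 * n) g"
    using backward[OF assms(1)] assms(2) by blast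
  show ?thesis unfolding g1
  proof (intro conjI ballI equalityI subsetI)
    fix G assume "G \<in> sigma n ` pure_sparse_gapsets_depth3 (2 * n) g"
    then show "\<not> pseudo_symmetric G" using fw by blast
  next
    fix G assume "G \<in> sigma n ` pure_sparse_gapsets_depth3 (2 * n) g"
    then show "G \<in> pure_sparse_gapsets (2 * n + 1) (3*n+2) - {G \<in> pure_sparse_gapsets (2 * n + 1) (3*n+2). pseudo_symmetric G}"
      using fw by blast
  next
    fix H assume "H \<in> pure_sparse_gapsets (2 * n + 1) (3*n+2) - {G \<in> pure_sparse_gapsets (2 * n + 1) (3*n+2). pseudo_symmetric G}"
    then show "H \<in> sigma n ` pure_sparse_gapsets_depth3 (2 * n) g" using bw by blast
  qed
qed


end
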